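(* Let $(X,d,\kappa)$ be a digital metric space, where either $X$ is finite or $d$ is an $\ell_p$ metric for some $1\le p\le\infty$. Let $S,T:X\to X$. Then the following are equivalent: (i) $S$ and $T$ are compatible; (ii) $S$ and $T$ are compatible of type (A); (iii) $S$ and $T$ are compatible of type (P).
   Context: A digital metric space is a triple $(X,d,\kappa)$ where $X\subset\mathbb{Z}^n$ for some positive integer $n$, $\kappa$ is an adjacency relation on $X$ (so $(X,\kappa)$ is a graph), and $d$ is a metric on $X$. For $x,y\in\mathbb{Z}^n$, the $\ell_p$ metric is $d(x,y)=(\sum_{i=1}^n|x_i-y_i|^p)^{1/p}$ for $1\le p<\infty$ and $d(x,y)=\max_i|x_i-y_i|$ for $p=\infty$. Limits are taken with respect to the metric $d$. Call a sequence $\{x_n\}\subset X$ admissible if $\lim_{n\to\infty}S(x_n)=\lim_{n\to\infty}T(x_n)=t$ for some $t\in X$. $S$ and $T$ are compatible if $\lim_{n\to\infty}d(S(T(x_n)),T(S(x_n)))=0$ for every admissible sequence; compatible of type (A) if $\lim_{n\to\infty}d(S(T(x_n)),T(T(x_n)))=0=\lim_{n\to\infty}d(T(S(x_n)),S(S(x_n)))$ for every admissible sequence; compatible of type (P) if $\lim_{n\to\infty}d(S(S(x_n)),T(T(x_n)))=0$ for every admissible sequence. *)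

theory Defs
  imports "HOL-Analysis.Analysis"
begin

definition metric_on :: "('a set) \<Rightarrow> ('a \<Rightarrow> 'a \<Rightarrow> real) \<Rightarrow> bool" where
  "metric_on X d \<longleftrightarrow>
     (\<forall>x\<in>X. \<forall>y\<in>X. d x y \<ge> 0 \<and> (d x y = 0 \<longleftrightarrow> x = y) \<and> d x y = d y x) \<and>
     (\<forall>x\<in>X. \<forall>y\<in>X. \<forall>z\<in>X. d x z \<le> d x y + d y z)"

definition adjacency_on :: "('a set) \<Rightarrow> ('a \<Rightarrow> 'a \<Rightarrow> bool) \<Rightarrow> bool" where
  "adjacency_on X \<kappa> \<longleftrightarrow> (\<forall>x\<in>X. \<forall>y\<in>X. \<kappa> x y \<longleftrightarrow> \<kappa> y x) \<and> (\<forall>x\<in>X. \<not> \<kappa> x x)"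

definition digital_metric_space ::
  "((int ^ 'n) set) \<Rightarrow> (int ^ 'n \<Rightarrow> int ^ 'n \<Rightarrow> real) \<Rightarrow> (int ^ 'n \<Rightarrow> int ^ 'n \<Rightarrow> bool) \<Rightarrow> bool" where
  "digital_metric_space X d \<kappa> \<longleftrightarrow> metric_on X d \<and> adjacency_on X \<kappa>"

definition lp_dist :: "real \<Rightarrow> int ^ 'n \<Rightarrow> int ^ 'n \<Rightarrow> real" where
  "lp_dist p x y = (\<Sum>i\<in>UNIV. \<bar>real_of_int (x $ i - y $ i)\<bar> powr p) powr (1 / p)"

definition linf_dist :: "int ^ 'n \<Rightarrow> int ^ 'n \<Rightarrow> real" where
  "linf_dist x y = Max ((\<lambda>i. \<bar>real_of_int (x $ i - y $ i)\<bar>) ` UNIV)"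

definition is_lp_metric :: "((int ^ 'n) set) \<Rightarrow> (int ^ 'n \<Rightarrow> int ^ 'n \<Rightarrow> real) \<Rightarrow> bool" where
  "is_lp_metric X d \<longleftrightarrow>
     (\<exists>p::real. p \<ge> 1 \<and> (\<forall>x\<in>X. \<forall>y\<in>X. d x y = lp_dist p x y)) \<or>
     (\<forall>x\<in>X. \<forall>y\<in>X. d x y = linf_dist x y)"

definition d_tendsto :: "('a \<Rightarrow> 'a \<Rightarrow> real) \<Rightarrow> (nat \<Rightarrow> 'a) \<Rightarrow> 'a \<Rightarrow> bool" where
  "d_tendsto d s t \<longleftrightarrow> (\<lambda>n. d (s n) t) \<longlonglongrightarrow> 0"

definition admissible :: "'a set \<Rightarrow> ('a \<Rightarrow> 'a \<Rightarrow> real) \<Rightarrow> ('a \<Rightarrow> 'a) \<Rightarrow> ('a \<Rightarrow> 'a) \<Rightarrow> (nat \<Rightarrow> 'a) \<Rightarrow> bool" where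
  "admissible X d S T x \<longleftrightarrow> (\<forall>n. x n \<in> X) \<and>
     (\<exists>t\<in>X. d_tendsto d (\<lambda>n. S (x n)) t \<and> d_tendsto d (\<lambda>n. T (x n)) t)"

definition compatible :: "'a set \<Rightarrow> ('a \<Rightarrow> 'a \<Rightarrow> real) \<Rightarrow> ('a \<Rightarrow> 'a) \<Rightarrow> ('a \<Rightarrow> 'a) \<Rightarrow> bool" where
  "compatible X d S T \<longleftrightarrow> (\<forall>x. admissible X d S T x \<longrightarrow>
     (\<lambda>n. d (S (T (x n))) (T (S (x n)))) \<longlonglongrightarrow> 0)"

definition compatible_A :: "'a set \<Rightarrow> ('a \<Rightarrow> 'a \<Rightarrow> real) \<Rightarrow> ('a \<Rightarrow> 'a) \<Rightarrow> ('a \<Rightarrow> 'a) \<Rightarrow> bool" where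
  "compatible_A X d S T \<longleftrightarrow> (\<forall>x. admissible X d S T x \<longrightarrow>
     (\<lambda>n. d (S (T (x n))) (T (T (x n)))) \<longlonglongrightarrow> 0 \<and>
     (\<lambda>n. d (T (S (x n))) (S (S (x n)))) \<longlonglongrightarrow> 0)"

definition compatible_P :: "'a set \<Rightarrow> ('a \<Rightarrow> 'a \<Rightarrow> real) \<Rightarrow> ('a \<Rightarrow> 'a) \<Rightarrow> ('a \<Rightarrow> 'a) \<Rightarrow> bool" where
  "compatible_P X d S T \<longleftrightarrow> (\<forall>x. admissible X d S T x \<longrightarrow>
     (\<lambda>n. d (S (S (x n))) (T (T (x n)))) \<longlonglongrightarrow> 0)"

end

theory Submission
  imports Defs
begin

lemma int_vec_diff:
  fixes x y :: "int ^ 'n"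
  assumes "x \<noteq> y"
  obtains i where "\<bar>real_of_int (x $ i - y $ i)\<bar> \<ge> 1"
proof -
  from assms obtain i where "x $ i \<noteq> y $ i" by (metis vec_eq_iff)
  hence "\<bar>x $ i - y $ i\<bar> \<ge> 1" by linarith
  hence "\<bar>real_of_int (x $ i - y $ i)\<bar> \<ge> 1" by (metis of_int_1_le_iff of_int_abs)
  thus ?thesis using that by blast
qed

lemma lp_ge1:
  fixes x y :: "int ^ 'n"
  assumes "x \<noteq> y" "p \<ge> 1"
  shows "lp_dist p x y \<ge> 1"
proof -
  obtain i where i: "\<bar>real_of_int (x $ i - y $ i)\<bar> \<ge> 1" using int_vec_diff[OF assms(1)] by blast
  have "1 \<le> \<bar>real_of_int (x $ i - y $ i)\<bar> powr p"
    using i assms(2) by (simp add: ge_one_powr_ge_zero)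
  also have "\<dots> \<le> (\<Sum>j\<in>UNIV. \<bar>real_of_int (x $ j - y $ j)\<bar> powr p)"
    by (rule member_le_sum) auto
  finally have s: "1 \<le> (\<Sum>j\<in>UNIV. \<bar>real_of_int (x $ j - y $ j)\<bar> powr p)" .
  have "1 \<le> (\<Sum>j\<in>UNIV. \<bar>real_of_int (x $ j - y $ j)\<bar> powr p) powr (1/p)"
    using s assms(2) by (simp add: ge_one_powr_ge_zero)
  thus ?thesis unfolding lp_dist_def .
qed

lemma linf_ge1:
  fixes x y :: "int ^ 'n"
  assumes "x \<noteq> y"
  shows "linf_dist x y \<ge> 1"
proof -
  obtain i where i: "\<bar>real_of_int (x $ i - y $ i)\<bar> \<ge> 1" using int_vec_diff[OF assms(1)] by blast
  also have "\<dots> \<le> linf_dist x y" unfolding linf_dist_def by (rule Max_ge) auto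
  finally show ?thesis .
qed

lemma discrete_eps:
  fixes X :: "(int ^ 'n) set" and d
  assumes "metric_on X d" "finite X \<or> is_lp_metric X d"
  shows "\<exists>e>0. \<forall>x\<in>X. \<forall>y\<in>X. d x y < e \<longrightarrow> x = y"
  using assms(2)
proof
  assume f: "finite X"
  let ?A = "insert 1 ((\<lambda>(x,y). d x y) ` {(x,y). x \<in> X \<and> y \<in> X \<and> x \<noteq> y})"
  have fin: "finite ?A" using f by (auto intro: finite_subset[of _ "X \<times> X"])
  have pos: "\<forall>a\<in>?A. a > 0" using assms(1) unfolding metric_on_def
    by (force simp: order_le_less)
  have "Min ?A > 0" using fin pos by simp
  moreover have "\<forall>x\<in>X. \<forall>y\<in>X. d x y < Min ?A \<longrightarrow> x = y"
  proof (intro ballI impI)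
    fix x y assume "x \<in> X" "y \<in> X" "d x y < Min ?A"
    show "x = y"
    proof (rule ccontr)
      assume "x \<noteq> y"
      hence "d x y \<in> ?A" using \<open>x \<in> X\<close> \<open>y \<in> X\<close> by force
      hence "Min ?A \<le> d x y" using fin by simp
      thus False using \<open>d x y < Min ?A\<close> by simp
    qed
  qed
  ultimately show ?thesis by blast
next
  assume "is_lp_metric X d"
  hence "\<forall>x\<in>X. \<forall>y\<in>X. d x y < 1 \<longrightarrow> x = y"
    unfolding is_lp_metric_def using lp_ge1 linf_ge1 by (metis not_le)
  thus ?thesis by (intro exI[of _ 1]) simp
qed

lemma ev_eq:
  assumes "\<forall>x\<in>X. \<forall>y\<in>X. d x y < e \<longrightarrow> x = y" "e > 0"
    "d_tendsto d s t" "\<forall>n. s n \<in> X" "t \<in> X"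
  shows "eventually (\<lambda>n. s n = t) sequentially"
proof -
  have "(\<lambda>n. d (s n) t) \<longlonglongrightarrow> 0" using assms(3) unfolding d_tendsto_def .
  hence "eventually (\<lambda>n. dist (d (s n) t) 0 < e) sequentially"
    using assms(2) by (rule tendstoD)
  thus ?thesis
  proof (rule eventually_mono)
    fix n assume "dist (d (s n) t) 0 < e"
    hence "d (s n) t < e" by (simp add: dist_real_def)
    thus "s n = t" using assms(1,4,5) by blast
  qed
qed

theorem theorem3p3:
  fixes X :: "(int ^ 'n) set"
    and d :: "int ^ 'n \<Rightarrow> int ^ 'n \<Rightarrow> real"
    and \<kappa> :: "int ^ 'n \<Rightarrow> int ^ 'n \<Rightarrow> bool"
    and S T :: "int ^ 'n \<Rightarrow> int ^ 'n"
  assumes "digital_metric_space X d \<kappa>"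
    and "finite X \<or> is_lp_metric X d"
    and "\<forall>x\<in>X. S x \<in> X"
    and "\<forall>x\<in>X. T x \<in> X"
  shows "(compatible X d S T \<longleftrightarrow> compatible_A X d S T) \<and>
         (compatible_A X d S T \<longleftrightarrow> compatible_P X d S T)"
proof -
  have met: "metric_on X d" using assms(1) unfolding digital_metric_space_def by simp
  obtain e where e: "e > 0" "\<forall>x\<in>X. \<forall>y\<in>X. d x y < e \<longrightarrow> x = y"
    using discrete_eps[OF met assms(2)] by blast
  have key: "eventually (\<lambda>n. d (S (T (x n))) (T (T (x n))) = d (S (T (x n))) (T (S (x n)))) sequentially
     \<and> eventually (\<lambda>n. d (T (S (x n))) (S (S (x n))) = d (S (T (x n))) (T (S (x n)))) sequentially
     \<and> eventually (\<lambda>n. d (S (S (x n))) (T (T (x n))) = d (S (T (x n))) (T (S (x n)))) sequentially"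
    if adm: "admissible X d S T x" for x
  proof -
    from adm obtain t where x: "\<forall>n. x n \<in> X" and t: "t \<in> X"
      and s1: "d_tendsto d (\<lambda>n. S (x n)) t" and s2: "d_tendsto d (\<lambda>n. T (x n)) t"
      unfolding admissible_def by blast
    have e1: "eventually (\<lambda>n. S (x n) = t) sequentially"
      by (rule ev_eq[OF e(2) e(1) s1]) (use x assms(3) t in auto)
    have e2: "eventually (\<lambda>n. T (x n) = t) sequentially"
      by (rule ev_eq[OF e(2) e(1) s2]) (use x assms(4) t in auto)
    have sym: "d (T t) (S t) = d (S t) (T t)"
      using met t assms(3,4) unfolding metric_on_def by blast
    show ?thesis
    proof (intro conjI)
      show "eventually (\<lambda>n. d (S (T (x n))) (T (T (x n))) = d (S (T (x n))) (T (S (x n)))) sequentially"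
        using e1 e2 by eventually_elim simp
      show "eventually (\<lambda>n. d (T (S (x n))) (S (S (x n))) = d (S (T (x n))) (T (S (x n)))) sequentially"
        using e1 e2 by eventually_elim (simp add: sym)
      show "eventually (\<lambda>n. d (S (S (x n))) (T (T (x n))) = d (S (T (x n))) (T (S (x n)))) sequentially"
        using e1 e2 by eventually_elim simp
    qed
  qed
  have A: "compatible X d S T \<longleftrightarrow> compatible_A X d S T"
    unfolding compatible_def compatible_A_def
  proof (intro iffI allI impI)
    fix x assume H: "\<forall>x. admissible X d S T x \<longrightarrow> (\<lambda>n. d (S (T (x n))) (T (S (x n)))) \<longlonglongrightarrow> 0"
      and a: "admissible X d S T x"
    have L: "(\<lambda>n. d (S (T (x n))) (T (S (x n)))) \<longlonglongrightarrow> 0" using H a by blast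
    from key[OF a] have k1: "eventually (\<lambda>n. d (S (T (x n))) (T (T (x n))) = d (S (T (x n))) (T (S (x n)))) sequentially"
      and k2: "eventually (\<lambda>n. d (T (S (x n))) (S (S (x n))) = d (S (T (x n))) (T (S (x n)))) sequentially" by blast+
    show "(\<lambda>n. d (S (T (x n))) (T (T (x n)))) \<longlonglongrightarrow> 0 \<and> (\<lambda>n. d (T (S (x n))) (S (S (x n)))) \<longlonglongrightarrow> 0"
    proof
      show "(\<lambda>n. d (S (T (x n))) (T (T (x n)))) \<longlonglongrightarrow> 0"
        by (rule Lim_transform_eventually[OF L], rule eventually_mono[OF k1]) simp
      show "(\<lambda>n. d (T (S (x n))) (S (S (x n)))) \<longlonglongrightarrow> 0"
        by (rule Lim_transform_eventually[OF L], rule eventually_mono[OF k2]) simp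
    qed
  next
    fix x assume H: "\<forall>x. admissible X d S T x \<longrightarrow> (\<lambda>n. d (S (T (x n))) (T (T (x n)))) \<longlonglongrightarrow> 0 \<and> (\<lambda>n. d (T (S (x n))) (S (S (x n)))) \<longlonglongrightarrow> 0"
      and a: "admissible X d S T x"
    have L: "(\<lambda>n. d (S (T (x n))) (T (T (x n)))) \<longlonglongrightarrow> 0" using H a by blast
    from key[OF a] have k1: "eventually (\<lambda>n. d (S (T (x n))) (T (T (x n))) = d (S (T (x n))) (T (S (x n)))) sequentially"
      and k3: "eventually (\<lambda>n. d (S (S (x n))) (T (T (x n))) = d (S (T (x n))) (T (S (x n)))) sequentially" by blast+
    show "(\<lambda>n. d (S (T (x n))) (T (S (x n)))) \<longlonglongrightarrow> 0"
      using L by (rule Lim_transform_eventually) (fact k1)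
  qed
  have P: "compatible X d S T \<longleftrightarrow> compatible_P X d S T"
    unfolding compatible_def compatible_P_def
  proof (intro iffI allI impI)
    fix x assume H: "\<forall>x. admissible X d S T x \<longrightarrow> (\<lambda>n. d (S (T (x n))) (T (S (x n)))) \<longlonglongrightarrow> 0"
      and a: "admissible X d S T x"
    have L: "(\<lambda>n. d (S (T (x n))) (T (S (x n)))) \<longlonglongrightarrow> 0" using H a by blast
    from key[OF a] have k3: "eventually (\<lambda>n. d (S (S (x n))) (T (T (x n))) = d (S (T (x n))) (T (S (x n)))) sequentially" by blast
    show "(\<lambda>n. d (S (S (x n))) (T (T (x n)))) \<longlonglongrightarrow> 0"
      by (rule Lim_transform_eventually[OF L], rule eventually_mono[OF k3]) simp
  next
    fix x assume H: "\<forall>x. admissible X d S T x \<longrightarrow> (\<lambda>n. d (S (S (x n))) (T (T (x n)))) \<longlonglongrightarrow> 0"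
      and a: "admissible X d S T x"
    have L: "(\<lambda>n. d (S (S (x n))) (T (T (x n)))) \<longlonglongrightarrow> 0" using H a by blast
    from key[OF a] have k1: "eventually (\<lambda>n. d (S (T (x n))) (T (T (x n))) = d (S (T (x n))) (T (S (x n)))) sequentially"
      and k3: "eventually (\<lambda>n. d (S (S (x n))) (T (T (x n))) = d (S (T (x n))) (T (S (x n)))) sequentially" by blast+
    show "(\<lambda>n. d (S (T (x n))) (T (S (x n)))) \<longlonglongrightarrow> 0"
      using L by (rule Lim_transform_eventually) (fact k3)
  qed
  show ?thesis using A P by blast
qed

end
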